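(* Let $K$ be a field of characteristic $0$, let $G$ be a finite group, let $\alpha$ be a one-dimensional character of $G$, and let $M$ be a monomial $G$-module given by a basis $(v_i)_{i\in I}$, an action of $G$ on $I$, and maps $\gamma_i\colon G\to K\setminus\{0\}$ with $\gamma_i(gh)=\gamma_{hi}(g)\gamma_i(h)$ and $gv_i=\gamma_i(g)v_{gi}$. Let $I^*$ be a system of distinct representatives of all $G$-orbits in $I$, and for each $i\in I^*$ let $G^{(i)}$ be a left transversal of the stabilizer $G_i$ in $G$. Let $I(M,\alpha)$ be the set of $i\in I$ such that $\gamma_i$ and $\alpha^{-1}$ coincide on $G_i$, and put $J(M,\alpha)=I^*\cap I(M,\alpha)$, $J_0(M,\alpha)=I^*\setminus J(M,\alpha)$. Consider the families (A) $v_i-\alpha(g)\gamma_i(g)v_{gi}$, for $i\in I^*$, $g\in G^{(i)}$, $g\notin G_i$; (B) $v_i$, for $i\in J_0(M,\alpha)$. Then: (i) the union of the families (A) and (B) is a basis of ${}_\alpha M$; (ii) the family $a_\alpha(v_j)$, $j\in J(M,\alpha)$, is a basis of $M_\alpha$; (iii) the family $v_j \bmod {}_\alpha M$, $j\in J(M,\alpha)$, is a basis of the factor space $M/{}_\alpha M$.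
   Context: A one-dimensional character of $G$ is a homomorphism $G\to K^\times$. A monomial $G$-module structure on a $K$-linear space $M$ is given by a basis $(v_i)_{i\in I}$, an action of $G$ on $I$ and maps $\gamma_i\colon G\to K\setminus\{0\}$ with $\gamma_i(gh)=\gamma_{hi}(g)\gamma_i(h)$ for all $i,g,h$, the action on $M$ being $gv_i=\gamma_i(g)v_{gi}$. For a one-dimensional character $\alpha$ of $G$: $a_\alpha=|G|^{-1}\sum_{g\in G}\alpha(g)g\in KG$, acting on $M$ by $z\mapsto a_\alpha z$; ${}_\alpha M$ is the $G$-submodule of $M$ generated by all differences $\alpha^{-1}(g)z-gz$ with $g\in G$, $z\in M$; $M_\alpha$ is the $G$-submodule of all $z\in M$ with $gz=\alpha^{-1}(g)z$ for all $g\in G$. $G_i$ is the stabilizer of $i$ in $G$. *)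

theory Defs
  imports Complex_Main "HOL-Algebra.Group_Action"
begin

definition one_dim_char :: "('g, 'b) monoid_scheme \<Rightarrow> ('g \<Rightarrow> 'k::field) \<Rightarrow> bool" where
  "one_dim_char G \<alpha> \<longleftrightarrow>
     (\<forall>g\<in>carrier G. \<alpha> g \<noteq> 0) \<and>
     (\<forall>g\<in>carrier G. \<forall>h\<in>carrier G. \<alpha> (g \<otimes>\<^bsub>G\<^esub> h) = \<alpha> g * \<alpha> h)"

definition family_basis ::
  "('k::field \<Rightarrow> 'm::ab_group_add \<Rightarrow> 'm) \<Rightarrow> ('x \<Rightarrow> 'm) \<Rightarrow> 'x set \<Rightarrow> 'm set \<Rightarrow> bool" where
  "family_basis scale f S U \<longleftrightarrow>
     inj_on f S \<and> Modules.module.independent scale (f ` S) \<and> Modules.module.span scale (f ` S) = U"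

text \<open>The family (f s mod U), s in S, is a basis of the factor space UNIV / U
  (written out: linear independence modulo U and spanning modulo U).\<close>
definition family_basis_mod ::
  "('k::field \<Rightarrow> 'm::ab_group_add \<Rightarrow> 'm) \<Rightarrow> ('x \<Rightarrow> 'm) \<Rightarrow> 'x set \<Rightarrow> 'm set \<Rightarrow> bool" where
  "family_basis_mod scale f S U \<longleftrightarrow>
     (\<forall>T c. finite T \<longrightarrow> T \<subseteq> S \<longrightarrow> (\<Sum>t\<in>T. scale (c t) (f t)) \<in> U \<longrightarrow> (\<forall>t\<in>T. c t = 0)) \<and>
     (\<forall>z. \<exists>T c. finite T \<and> T \<subseteq> S \<and> z - (\<Sum>t\<in>T. scale (c t) (f t)) \<in> U)"

definition gsubmodule_gen ::
  "('g, 'b) monoid_scheme \<Rightarrow> ('k::field \<Rightarrow> 'm::ab_group_add \<Rightarrow> 'm) \<Rightarrow> ('g \<Rightarrow> 'm \<Rightarrow> 'm) \<Rightarrow> 'm set \<Rightarrow> 'm set" where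
  "gsubmodule_gen G scale act S =
     \<Inter>{U. Modules.module.subspace scale U \<and> (\<forall>g\<in>carrier G. \<forall>u\<in>U. act g u \<in> U) \<and> S \<subseteq> U}"

definition alpha_sub ::
  "('g, 'b) monoid_scheme \<Rightarrow> ('k::field \<Rightarrow> 'm::ab_group_add \<Rightarrow> 'm) \<Rightarrow> ('g \<Rightarrow> 'm \<Rightarrow> 'm) \<Rightarrow> ('g \<Rightarrow> 'k) \<Rightarrow> 'm set" where
  "alpha_sub G scale act \<alpha> =
     gsubmodule_gen G scale act {scale (inverse (\<alpha> g)) z - act g z | g z. g \<in> carrier G}"

definition alpha_fix ::
  "('g, 'b) monoid_scheme \<Rightarrow> ('k::field \<Rightarrow> 'm::ab_group_add \<Rightarrow> 'm) \<Rightarrow> ('g \<Rightarrow> 'm \<Rightarrow> 'm) \<Rightarrow> ('g \<Rightarrow> 'k) \<Rightarrow> 'm set" where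
  "alpha_fix G scale act \<alpha> = {z. \<forall>g\<in>carrier G. act g z = scale (inverse (\<alpha> g)) z}"

definition a_op ::
  "('g, 'b) monoid_scheme \<Rightarrow> ('k::field \<Rightarrow> 'm::ab_group_add \<Rightarrow> 'm) \<Rightarrow> ('g \<Rightarrow> 'm \<Rightarrow> 'm) \<Rightarrow> ('g \<Rightarrow> 'k) \<Rightarrow> 'm \<Rightarrow> 'm" where
  "a_op G scale act \<alpha> z = scale (inverse (of_nat (card (carrier G))))
      (\<Sum>g\<in>carrier G. scale (\<alpha> g) (act g z))"

definition I_set ::
  "('g, 'b) monoid_scheme \<Rightarrow> 'i set \<Rightarrow> ('g \<Rightarrow> 'i \<Rightarrow> 'i) \<Rightarrow> ('i \<Rightarrow> 'g \<Rightarrow> 'k::field) \<Rightarrow> ('g \<Rightarrow> 'k) \<Rightarrow> 'i set" where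
  "I_set G I \<phi> \<gamma> \<alpha> = {i\<in>I. \<forall>g\<in>stabilizer G \<phi> i. \<gamma> i g = inverse (\<alpha> g)}"

end

theory Submission
  imports Defs
begin

context vector_space
begin

lemma fam_indepI:
  assumes H: "\<And>T c. finite T \<Longrightarrow> T \<subseteq> S \<Longrightarrow> (\<Sum>t\<in>T. scale (c t) (f t)) = 0 \<Longrightarrow> \<forall>t\<in>T. c t = 0"
  shows "inj_on f S \<and> independent (f ` S)"
proof
  show "inj_on f S"
  proof (rule inj_onI, rule ccontr)
    fix s s' assume s: "s \<in> S" "s' \<in> S" "f s = f s'" "s \<noteq> s'"
    let ?c = "\<lambda>t. if t = s then 1 else - 1 :: 'a"
    have "(\<Sum>t\<in>{s, s'}. scale (?c t) (f t)) = 0" using s by simp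
    from H[OF _ _ this] s show False by auto
  qed
  show "independent (f ` S)"
    unfolding independent_explicit_finite_subsets
  proof (intro allI impI ballI)
    fix U u x assume U: "U \<subseteq> f ` S" "finite U" and su: "(\<Sum>v\<in>U. u v *s v) = 0" and x: "x \<in> U"
    obtain T where T: "T \<subseteq> S" "inj_on f T" "U = f ` T" using subset_image_inj[THEN iffD1, OF U(1)] by blast
    have fT: "finite T" using T U finite_image_iff by (metis (no_types))
    have "(\<Sum>t\<in>T. scale (u (f t)) (f t)) = 0" using su T by (simp add: sum.reindex)
    from H[OF fT T(1) this] x T show "u x = 0" by auto
  qed
qed

lemma fam_indepD:
  assumes "inj_on f S" "independent (f ` S)" "finite T" "T \<subseteq> S"
    and "(\<Sum>t\<in>T. scale (c t) (f t)) = 0" "t \<in> T"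
  shows "c t = 0"
proof -
  have inj: "inj_on f T" using assms inj_on_subset by metis
  let ?u = "\<lambda>x. c (inv_into T f x)"
  have "(\<Sum>x\<in>f ` T. ?u x *s x) = (\<Sum>t\<in>T. scale (c t) (f t))"
    using inj by (simp add: sum.reindex inv_into_f_f)
  also have "\<dots> = 0" by fact
  finally have "?u (f t) = 0"
    using independentD[OF assms(2), of "f ` T" ?u "f t"] assms by auto
  then show ?thesis using inj assms by (simp add: inv_into_f_f)
qed

lemma fam_span_explicit:
  assumes "y \<in> span (f ` S)"
  shows "\<exists>T c. finite T \<and> T \<subseteq> S \<and> y = (\<Sum>t\<in>T. scale (c t) (f t))"
proof -
  obtain U r where U: "finite U" "U \<subseteq> f ` S" "y = (\<Sum>a\<in>U. r a *s a)"
    using assms unfolding span_explicit by blast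
  obtain T where T: "T \<subseteq> S" "inj_on f T" "U = f ` T" using subset_image_inj[THEN iffD1, OF U(2)] by blast
  have fT: "finite T" using T U finite_image_iff by (metis (no_types))
  have "y = (\<Sum>a\<in>f ` T. r a *s a)" by (simp only: U(3) T(3))
  also have "\<dots> = (\<Sum>t\<in>T. scale (r (f t)) (f t))" by (simp only: sum.reindex[OF T(2)] o_def)
  finally have yeq: "y = (\<Sum>t\<in>T. scale (r (f t)) (f t))" .
  show ?thesis
    by (rule exI[of _ T], rule exI[of _ "\<lambda>t. r (f t)"]) (simp only: fT T(1) yeq simp_thms)
qed

end


locale pp_ctx =
  fixes G :: "('g, 'b) monoid_scheme" (structure)
    and scale :: "'k::field_char_0 \<Rightarrow> 'm::ab_group_add \<Rightarrow> 'm"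
    and act :: "'g \<Rightarrow> 'm \<Rightarrow> 'm"
    and v :: "'i \<Rightarrow> 'm"
    and I :: "'i set"
    and \<phi> :: "'g \<Rightarrow> 'i \<Rightarrow> 'i"
    and \<gamma> :: "'i \<Rightarrow> 'g \<Rightarrow> 'k"
    and \<alpha> :: "'g \<Rightarrow> 'k"
    and Istar :: "'i set"
    and T :: "'i \<Rightarrow> 'g set"
  assumes grp: "group G" and fin: "finite (carrier G)"
    and vs: "vector_space scale"
    and char: "one_dim_char G \<alpha>"
    and basis: "family_basis scale v I UNIV"
    and action: "group_action G I \<phi>"
    and gamma_nz: "\<And>i g. i \<in> I \<Longrightarrow> g \<in> carrier G \<Longrightarrow> \<gamma> i g \<noteq> 0"
    and gamma_cocycle: "\<And>i g h. i \<in> I \<Longrightarrow> g \<in> carrier G \<Longrightarrow> h \<in> carrier G \<Longrightarrow>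
            \<gamma> i (g \<otimes> h) = \<gamma> (\<phi> h i) g * \<gamma> i h"
    and act_lin: "\<And>g. g \<in> carrier G \<Longrightarrow> Vector_Spaces.linear scale scale (act g)"
    and act_basis: "\<And>g i. g \<in> carrier G \<Longrightarrow> i \<in> I \<Longrightarrow> act g (v i) = scale (\<gamma> i g) (v (\<phi> g i))"
    and Istar_sub: "Istar \<subseteq> I"
    and Istar_rep: "\<And>i. i \<in> I \<Longrightarrow> \<exists>!r. r \<in> Istar \<and> i \<in> orbit G \<phi> r"
    and T_sub: "\<And>i. i \<in> Istar \<Longrightarrow> T i \<subseteq> carrier G"
    and T_transv: "\<And>i g. i \<in> Istar \<Longrightarrow> g \<in> carrier G \<Longrightarrow>
            \<exists>!t. t \<in> T i \<and> t \<in> g <# stabilizer G \<phi> i"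
begin

sublocale grp: group G by (rule grp)
sublocale ga: group_action G I \<phi> by (rule action)
sublocale vs: vector_space scale by (rule vs)

lemma v_basis: "vs.independent (v ` I)" "vs.span (v ` I) = UNIV" "inj_on v I"
  using basis unfolding family_basis_def by auto

definition R where "R z k = vs.representation (v ` I) z (v k)"

lemma R_add: "R (x + y) k = R x k + R y k"
  by (simp add: R_def vs.representation_add v_basis)
lemma R_diff: "R (x - y) k = R x k - R y k"
  by (simp add: R_def vs.representation_diff v_basis)
lemma R_scale: "R (scale c x) k = c * R x k"
  by (simp add: R_def vs.representation_scale v_basis)
lemma R_zero: "R 0 k = 0"
  by (simp add: R_def vs.representation_zero)
lemma R_sum: "R (sum f A) k = (\<Sum>a\<in>A. R (f a) k)"
  by (simp add: R_def vs.representation_sum v_basis)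
lemma R_v: assumes "i \<in> I" "k \<in> I" shows "R (v i) k = (if i = k then 1 else 0)"
  using assms by (simp add: R_def vs.representation_basis v_basis inj_on_eq_iff[OF v_basis(3)])

lemma act_hom: "g \<in> carrier G \<Longrightarrow> module_hom scale scale (act g)"
  using act_lin by (simp add: module_hom_iff_linear)

lemma act_add: "g \<in> carrier G \<Longrightarrow> act g (x + y) = act g x + act g y"
  using module_hom.add[OF act_hom] by blast
lemma act_scale: "g \<in> carrier G \<Longrightarrow> act g (scale c x) = scale c (act g x)"
  using module_hom.scale[OF act_hom] by blast
lemma act_diff: "g \<in> carrier G \<Longrightarrow> act g (x - y) = act g x - act g y"
  using module_hom.diff[OF act_hom] by blast
lemma act_zero: "g \<in> carrier G \<Longrightarrow> act g 0 = 0"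
  using module_hom.zero[OF act_hom] by blast
lemma act_sum: "g \<in> carrier G \<Longrightarrow> act g (sum f A) = (\<Sum>a\<in>A. act g (f a))"
  using module_hom.sum[OF act_hom] by blast

lemma act_comp:
  assumes g: "g \<in> carrier G" and h: "h \<in> carrier G"
  shows "act g (act h z) = act (g \<otimes> h) z"
proof -
  have l1: "Vector_Spaces.linear scale scale (act g \<circ> act h)"
    by (rule Vector_Spaces.linear_compose[OF act_lin[OF h] act_lin[OF g]])
  have vp: "vector_space_pair scale scale" by (simp add: vector_space_pair_def vs)
  have "(act g \<circ> act h) z = act (g \<otimes> h) z"
  proof (rule vector_space_pair.linear_eq_on[OF vp l1 act_lin[of "g \<otimes> h"]])
    show "g \<otimes> h \<in> carrier G" using g h by simp
    show "z \<in> vs.span (v ` I)" using v_basis by simp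
    fix b assume "b \<in> v ` I"
    then obtain i where i: "i \<in> I" "b = v i" by blast
    have hi: "\<phi> h i \<in> I" using ga.element_image h i by blast
    have "act g (act h (v i)) = scale (\<gamma> i h) (scale (\<gamma> (\<phi> h i) g) (v (\<phi> g (\<phi> h i))))"
      using act_basis g h i hi act_scale by simp
    also have "\<dots> = scale (\<gamma> i (g \<otimes> h)) (v (\<phi> (g \<otimes> h) i))"
      using gamma_cocycle[OF i(1) g h] ga.composition_rule[OF i(1) g h] by (simp add: mult.commute)
    also have "\<dots> = act (g \<otimes> h) (v i)" using act_basis g h i by simp
    finally show "(act g \<circ> act h) b = act (g \<otimes> h) b" using i by simp
  qed
  then show ?thesis by simp
qed


lemma ch_nz: "g \<in> carrier G \<Longrightarrow> \<alpha> g \<noteq> 0"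
  using char unfolding one_dim_char_def by blast
lemma ch_mult: "g \<in> carrier G \<Longrightarrow> h \<in> carrier G \<Longrightarrow> \<alpha> (g \<otimes> h) = \<alpha> g * \<alpha> h"
  using char unfolding one_dim_char_def by blast

lemma sum_rmult:
  assumes g: "g \<in> carrier G"
  shows "(\<Sum>h\<in>carrier G. F (h \<otimes> g)) = (\<Sum>k\<in>carrier G. F k)"
  by (rule sum.reindex_bij_witness[where i="\<lambda>k. k \<otimes> inv g" and j="\<lambda>h. h \<otimes> g"])
     (use g in \<open>auto simp: grp.m_assoc\<close>)

lemma sum_lmult:
  assumes g: "g \<in> carrier G"
  shows "(\<Sum>h\<in>carrier G. F (g \<otimes> h)) = (\<Sum>k\<in>carrier G. F k)"
  by (rule sum.reindex_bij_witness[where i="\<lambda>k. inv g \<otimes> k" and j="\<lambda>h. g \<otimes> h"])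
     (use g in \<open>auto simp: grp.m_assoc[symmetric]\<close>)

abbreviation aa where "aa \<equiv> a_op G scale act \<alpha>"

abbreviation cG where "cG \<equiv> inverse (of_nat (card (carrier G)) :: 'k)"

lemma aa_def': "aa z = scale cG (\<Sum>g\<in>carrier G. scale (\<alpha> g) (act g z))"
  by (simp add: a_op_def)

lemma aa_act:
  assumes g: "g \<in> carrier G"
  shows "aa (act g z) = scale (inverse (\<alpha> g)) (aa z)"
proof -
  have "(\<Sum>h\<in>carrier G. scale (\<alpha> h) (act h (act g z)))
      = (\<Sum>h\<in>carrier G. scale (inverse (\<alpha> g)) (scale (\<alpha> (h \<otimes> g)) (act (h \<otimes> g) z)))"
  proof (rule sum.cong)
    fix h assume h: "h \<in> carrier G"
    have "\<alpha> h = inverse (\<alpha> g) * \<alpha> (h \<otimes> g)" using ch_mult[OF h g] ch_nz[OF g] by simp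
    then show "scale (\<alpha> h) (act h (act g z)) = scale (inverse (\<alpha> g)) (scale (\<alpha> (h \<otimes> g)) (act (h \<otimes> g) z))"
      using act_comp[OF h g] by simp
  qed simp
  also have "\<dots> = scale (inverse (\<alpha> g)) (\<Sum>h\<in>carrier G. scale (\<alpha> (h \<otimes> g)) (act (h \<otimes> g) z))"
    by (simp add: vs.scale_sum_right)
  also have "\<dots> = scale (inverse (\<alpha> g)) (\<Sum>k\<in>carrier G. scale (\<alpha> k) (act k z))"
    using sum_rmult[OF g, of "\<lambda>k. scale (\<alpha> k) (act k z)"] by simp
  finally show ?thesis by (simp add: aa_def' mult.commute)
qed

lemma act_aa:
  assumes g: "g \<in> carrier G"
  shows "act g (aa z) = scale (inverse (\<alpha> g)) (aa z)"
proof -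
  have "act g (aa z) = scale cG (\<Sum>h\<in>carrier G. scale (\<alpha> h) (act g (act h z)))"
    by (simp add: aa_def' act_scale[OF g] act_sum[OF g])
  also have "(\<Sum>h\<in>carrier G. scale (\<alpha> h) (act g (act h z)))
      = (\<Sum>h\<in>carrier G. scale (inverse (\<alpha> g)) (scale (\<alpha> (g \<otimes> h)) (act (g \<otimes> h) z)))"
  proof (rule sum.cong)
    fix h assume h: "h \<in> carrier G"
    have "\<alpha> h = inverse (\<alpha> g) * \<alpha> (g \<otimes> h)" using ch_mult[OF g h] ch_nz[OF g] by simp
    then show "scale (\<alpha> h) (act g (act h z)) = scale (inverse (\<alpha> g)) (scale (\<alpha> (g \<otimes> h)) (act (g \<otimes> h) z))"
      using act_comp[OF g h] by simp
  qed simp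
  also have "\<dots> = scale (inverse (\<alpha> g)) (\<Sum>h\<in>carrier G. scale (\<alpha> (g \<otimes> h)) (act (g \<otimes> h) z))"
    by (simp add: vs.scale_sum_right)
  also have "\<dots> = scale (inverse (\<alpha> g)) (\<Sum>k\<in>carrier G. scale (\<alpha> k) (act k z))"
    using sum_lmult[OF g, of "\<lambda>k. scale (\<alpha> k) (act k z)"] by simp
  finally show ?thesis by (simp add: aa_def' mult.commute)
qed

lemma aa_add: "aa (x + y) = aa x + aa y"
  by (simp add: aa_def' act_add vs.scale_right_distrib sum.distrib)

lemma aa_scale: "aa (scale c x) = scale c (aa x)"
proof -
  have "(\<Sum>g\<in>carrier G. scale (\<alpha> g) (act g (scale c x))) = scale c (\<Sum>g\<in>carrier G. scale (\<alpha> g) (act g x))"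
    by (simp add: act_scale vs.scale_sum_right mult.commute)
  then show ?thesis by (simp add: aa_def' mult.commute)
qed

lemma aa_hom: "module_hom scale scale aa"
  using aa_add aa_scale
  by (simp add: module_hom_def module_hom_axioms_def module_iff_vector_space vs)

lemma aa_zero: "aa 0 = 0" using module_hom.zero[OF aa_hom] .
lemma aa_diff: "aa (x - y) = aa x - aa y" using module_hom.diff[OF aa_hom] .
lemma aa_sum: "aa (sum f A) = (\<Sum>a\<in>A. aa (f a))" using module_hom.sum[OF aa_hom] .

lemma card_nz: "(of_nat (card (carrier G)) :: 'k) \<noteq> 0"
proof -
  have "card (carrier G) \<noteq> 0" using fin grp.one_closed by (auto simp: card_eq_0_iff)
  then show ?thesis by simp
qed

lemma aa_fix:
  assumes z: "z \<in> alpha_fix G scale act \<alpha>"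
  shows "aa z = z"
proof -
  have "(\<Sum>g\<in>carrier G. scale (\<alpha> g) (act g z)) = (\<Sum>g\<in>carrier G. scale 1 z)"
    using z ch_nz by (auto simp: alpha_fix_def intro!: sum.cong)
  also have "\<dots> = scale (of_nat (card (carrier G))) z"
    using vs.scale_sum_left[of "\<lambda>_. 1" "carrier G" z] by simp
  finally show ?thesis using card_nz by (simp add: aa_def')
qed

lemma fix_subspace: "vs.subspace (alpha_fix G scale act \<alpha>)"
  unfolding vs.subspace_def alpha_fix_def
  by (auto simp: act_zero act_add act_scale vs.scale_right_distrib mult.commute)

lemma aa_in_fix: "aa z \<in> alpha_fix G scale act \<alpha>"
  using act_aa by (simp add: alpha_fix_def)

abbreviation A where "A \<equiv> alpha_sub G scale act \<alpha>"

lemma A_subspace: "vs.subspace A"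
  unfolding alpha_sub_def gsubmodule_gen_def by (rule vs.subspace_Inter) blast

lemma A_gen: "g \<in> carrier G \<Longrightarrow> scale (inverse (\<alpha> g)) z - act g z \<in> A"
  unfolding alpha_sub_def gsubmodule_gen_def by blast

lemma aa_A: assumes z: "z \<in> A" shows "aa z = 0"
proof -
  let ?U = "{z. aa z = 0}"
  have "vs.subspace ?U" unfolding vs.subspace_def by (simp add: aa_zero aa_add aa_scale)
  moreover have "\<forall>g\<in>carrier G. \<forall>u\<in>?U. act g u \<in> ?U" by (simp add: aa_act)
  moreover have "{scale (inverse (\<alpha> g)) z - act g z | g z. g \<in> carrier G} \<subseteq> ?U"
    by (auto simp: aa_diff aa_scale aa_act)
  ultimately have "A \<subseteq> ?U" unfolding alpha_sub_def gsubmodule_gen_def by blast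
  then show ?thesis using z by blast
qed


lemma rep_eq:
  assumes r: "r \<in> Istar" "r' \<in> Istar" and g: "g \<in> carrier G" "\<phi> g r = r'"
  shows "r = r'"
proof -
  have r'I: "r' \<in> I" using Istar_sub r by blast
  have "r' \<in> orbit G \<phi> r" using g unfolding orbit_def by blast
  moreover have "r' \<in> orbit G \<phi> r'" using ga.orbit_refl r'I .
  ultimately show ?thesis using Istar_rep[OF r'I] r by blast
qed

lemma coset_self:
  assumes "i \<in> I" "t \<in> carrier G"
  shows "t \<in> t <# stabilizer G \<phi> i"
proof -
  have "\<one> \<in> stabilizer G \<phi> i" using ga.stabilizer_one_closed assms(1) .
  moreover have "t = t \<otimes> \<one>" using assms(2) by simp
  ultimately show ?thesis unfolding l_coset_def by blast
qed

lemma T_unique: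
  assumes i: "i \<in> Istar" and t: "t \<in> T i" "t' \<in> T i" and eq: "\<phi> t i = \<phi> t' i"
  shows "t = t'"
proof -
  have iI: "i \<in> I" using i Istar_sub by blast
  have tG: "t \<in> carrier G" "t' \<in> carrier G" using T_sub[OF i] t by blast+
  have "\<phi> (inv t \<otimes> t') i = \<phi> (inv t) (\<phi> t' i)"
    using ga.composition_rule[OF iI] tG by simp
  also have "\<dots> = i" using eq ga.orbit_sym_aux[OF tG(1) iI refl] by simp
  finally have s: "inv t \<otimes> t' \<in> stabilizer G \<phi> i" using tG by (simp add: stabilizer_def)
  have "t' = t \<otimes> (inv t \<otimes> t')" using tG by (simp add: grp.m_assoc[symmetric])
  then have "t' \<in> t <# stabilizer G \<phi> i" using s unfolding l_coset_def by blast
  moreover have "t \<in> t <# stabilizer G \<phi> i" using coset_self iI tG by blast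
  ultimately show ?thesis using T_transv[OF i tG(1)] t by blast
qed

lemma Aidx_inj:
  assumes i: "i \<in> Istar" "i' \<in> Istar" and g: "g \<in> T i" "g' \<in> T i'"
    and eq: "\<phi> g i = \<phi> g' i'"
  shows "i = i' \<and> g = g'"
proof -
  have iI: "i \<in> I" "i' \<in> I" using i Istar_sub by blast+
  have gG: "g \<in> carrier G" "g' \<in> carrier G" using T_sub i g by blast+
  have kI: "\<phi> g i \<in> I" using ga.element_image gG iI by blast
  have "\<phi> g i \<in> orbit G \<phi> i" using gG unfolding orbit_def by blast
  moreover have "\<phi> g i \<in> orbit G \<phi> i'" using gG eq unfolding orbit_def by blast
  ultimately have ii: "i = i'" using Istar_rep[OF kI] i by blast
  then show ?thesis using T_unique[OF i(1) g(1)] g(2) eq by auto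
qed

lemma orbit_cover:
  assumes i: "i \<in> I"
  shows "\<exists>r\<in>Istar. \<exists>t\<in>T r. \<phi> t r = i"
proof -
  obtain r where r: "r \<in> Istar" "i \<in> orbit G \<phi> r" using Istar_rep[OF i] by blast
  have rI: "r \<in> I" using r Istar_sub by blast
  obtain g0 where g0: "g0 \<in> carrier G" "\<phi> g0 r = i" using r unfolding orbit_def by blast
  obtain t where t: "t \<in> T r" "t \<in> g0 <# stabilizer G \<phi> r" using T_transv[OF r(1) g0(1)] by blast
  then obtain s where s: "s \<in> stabilizer G \<phi> r" "t = g0 \<otimes> s" unfolding l_coset_def by blast
  have sG: "s \<in> carrier G" "\<phi> s r = r" using s by (auto simp: stabilizer_def)
  have "\<phi> t r = \<phi> g0 (\<phi> s r)" using s(2) ga.composition_rule[OF rI g0(1) sG(1)] by simp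
  then have "\<phi> t r = i" using sG g0 by simp
  then show ?thesis using r t by blast
qed

definition Aidx where "Aidx = {(i, g). i \<in> Istar \<and> g \<in> T i \<and> g \<notin> stabilizer G \<phi> i}"
abbreviation J where "J \<equiv> Istar \<inter> I_set G I \<phi> \<gamma> \<alpha>"
definition e where "e = (\<lambda>x. case x of Inl (i, g) \<Rightarrow> v i - scale (\<alpha> g * \<gamma> i g) (v (\<phi> g i)) | Inr i \<Rightarrow> v i)"

lemma Aidx_D:
  assumes "(i, g) \<in> Aidx"
  shows "i \<in> Istar" "g \<in> T i" "g \<notin> stabilizer G \<phi> i" "i \<in> I" "g \<in> carrier G"
    "\<phi> g i \<in> I" "\<phi> g i \<notin> Istar" "\<phi> g i \<noteq> i"
proof -
  show i: "i \<in> Istar" "g \<in> T i" "g \<notin> stabilizer G \<phi> i" using assms by (auto simp: Aidx_def)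
  show iI: "i \<in> I" using i Istar_sub by blast
  show gG: "g \<in> carrier G" using i T_sub by blast
  show "\<phi> g i \<in> I" using ga.element_image gG iI by blast
  show ne: "\<phi> g i \<noteq> i" using i gG by (auto simp: stabilizer_def)
  show "\<phi> g i \<notin> Istar" using rep_eq[OF i(1) _ gG refl] ne by auto
qed

lemma R_lin_sum: "(\<Sum>x\<in>Tt. scale (c x) (f x)) = 0 \<Longrightarrow> (\<Sum>x\<in>Tt. c x * R (f x) k) = 0"
  using R_sum[of "\<lambda>x. scale (c x) (f x)" Tt k] by (simp add: R_scale R_zero)

lemma E1:
  assumes Tt: "finite Tt" "Tt \<subseteq> Inl ` Aidx \<union> Inr ` Istar"
    and s: "(\<Sum>x\<in>Tt. scale (c x) (e x)) = 0"
  shows "\<forall>x\<in>Tt. c x = 0"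
proof -
  note Rs = R_lin_sum[OF s]
  have inl: "c (Inl (i, g)) = 0" if x: "Inl (i, g) \<in> Tt" for i g
  proof -
    have ig: "(i, g) \<in> Aidx" using x Tt by auto
    note igD = Aidx_D[OF ig]
    let ?k = "\<phi> g i"
    have pt: "c x * R (e x) ?k = (if x = Inl (i, g) then - c x * (\<alpha> g * \<gamma> i g) else 0)"
      if xT: "x \<in> Tt" for x
    proof -
      from xT Tt consider (l) i' g' where "x = Inl (i', g')" "(i', g') \<in> Aidx"
        | (r) r where "x = Inr r" "r \<in> Istar" by (metis (no_types, lifting) UnE imageE old.prod.exhaust subsetD)
      then show ?thesis
      proof cases
        case l
        note D = Aidx_D[OF l(2)]
        have "R (e x) ?k = (if i' = ?k then 1 else 0) - \<alpha> g' * \<gamma> i' g' * (if \<phi> g' i' = ?k then 1 else 0)"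
          using l D igD by (simp add: e_def R_diff R_scale R_v)
        moreover have "i' \<noteq> ?k" using igD D by auto
        moreover have "\<phi> g' i' = ?k \<longleftrightarrow> (i', g') = (i, g)"
          using Aidx_inj[OF D(1) igD(1) D(2) igD(2)] by auto
        ultimately show ?thesis using l by auto
      next
        case r
        have "r \<noteq> ?k" using r igD by auto
        then show ?thesis using r igD Istar_sub by (auto simp: e_def R_v)
      qed
    qed
    have "(\<Sum>x\<in>Tt. c x * R (e x) ?k) = (\<Sum>x\<in>Tt. if x = Inl (i, g) then - c x * (\<alpha> g * \<gamma> i g) else 0)"
      by (rule sum.cong) (auto simp: pt)
    also have "\<dots> = - c (Inl (i, g)) * (\<alpha> g * \<gamma> i g)" using x Tt(1) by (simp add: sum.delta)
    finally have "c (Inl (i, g)) * (\<alpha> g * \<gamma> i g) = 0" using Rs by simp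
    then show ?thesis using ch_nz[OF igD(5)] gamma_nz[OF igD(4) igD(5)] by simp
  qed
  have inr: "c (Inr r) = 0" if x: "Inr r \<in> Tt" for r
  proof -
    have r: "r \<in> Istar" "r \<in> I" using x Tt Istar_sub by auto
    have pt: "c x * R (e x) r = (if x = Inr r then c x else 0)" if xT: "x \<in> Tt" for x
    proof -
      from xT Tt consider (l) i' g' where "x = Inl (i', g')" "(i', g') \<in> Aidx"
        | (r) r' where "x = Inr r'" "r' \<in> Istar" by (metis (no_types, lifting) UnE imageE old.prod.exhaust subsetD)
      then show ?thesis
      proof cases
        case l then show ?thesis using inl xT by auto
      next
        case r then show ?thesis using \<open>r \<in> I\<close> Istar_sub by (auto simp: e_def R_v)
      qed
    qed
    have "(\<Sum>x\<in>Tt. c x * R (e x) r) = (\<Sum>x\<in>Tt. if x = Inr r then c x else 0)"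
      by (rule sum.cong) (auto simp: pt)
    also have "\<dots> = c (Inr r)" using x Tt(1) by (simp add: sum.delta)
    finally show ?thesis using Rs by simp
  qed
  show ?thesis
  proof
    fix x assume "x \<in> Tt"
    then show "c x = 0" using inl inr by (cases x) auto
  qed
qed

lemma E2: "vs.span (e ` (Inl ` Aidx \<union> Inr ` Istar)) = UNIV"
proof -
  let ?S = "vs.span (e ` (Inl ` Aidx \<union> Inr ` Istar))"
  have "v ` I \<subseteq> ?S"
  proof
    fix w assume "w \<in> v ` I"
    then obtain i where i: "i \<in> I" "w = v i" by blast
    obtain r t where rt: "r \<in> Istar" "t \<in> T r" "\<phi> t r = i" using orbit_cover[OF i(1)] by blast
    have rI: "r \<in> I" and tG: "t \<in> carrier G" using rt Istar_sub T_sub by blast+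
    show "w \<in> ?S"
    proof (cases "t \<in> stabilizer G \<phi> r")
      case True
      then have "i = r" using rt by (simp add: stabilizer_def)
      then have "w = e (Inr r)" using i by (simp add: e_def)
      then show ?thesis using rt by (intro vs.span_base) blast
    next
      case False
      then have A: "(r, t) \<in> Aidx" using rt by (simp add: Aidx_def)
      let ?c = "\<alpha> t * \<gamma> r t"
      have cnz: "?c \<noteq> 0" using ch_nz[OF tG] gamma_nz[OF rI tG] by simp
      have "e (Inl (r, t)) \<in> ?S" using A by (intro vs.span_base) blast
      moreover have "e (Inr r) \<in> ?S" using rt by (intro vs.span_base) blast
      ultimately have "scale (inverse ?c) (e (Inr r) - e (Inl (r, t))) \<in> ?S"
        by (intro vs.span_scale vs.span_diff)
      moreover have "e (Inr r) - e (Inl (r, t)) = scale ?c w"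
        using rt i by (simp add: e_def)
      moreover have "scale (inverse ?c) (scale ?c w) = w"
        by (simp only: vs.scale_scale left_inverse[OF cnz] vs.scale_one)
      ultimately show ?thesis by simp
    qed
  qed
  then have "vs.span (v ` I) \<subseteq> ?S" by (rule vs.span_minimal) simp
  then show ?thesis using v_basis by auto
qed

lemma E3: "e ` (Inl ` Aidx \<union> Inr ` (Istar - J)) \<subseteq> A"
proof -
  have Ai: "e (Inl (i, g)) \<in> A" if ig: "(i, g) \<in> Aidx" for i g
  proof -
    note D = Aidx_D[OF ig]
    have "e (Inl (i, g)) = scale (\<alpha> g) (scale (inverse (\<alpha> g)) (v i) - act g (v i))"
      using D ch_nz[OF D(5)] by (simp add: e_def act_basis vs.scale_right_diff_distrib)
    then show ?thesis using A_gen[OF D(5)] A_subspace by (simp add: vs.subspace_scale)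
  qed
  have Bi: "e (Inr r) \<in> A" if r: "r \<in> Istar - J" for r
  proof -
    have rI: "r \<in> I" using r Istar_sub by blast
    then obtain h where h: "h \<in> stabilizer G \<phi> r" "\<gamma> r h \<noteq> inverse (\<alpha> h)"
      using r by (auto simp: I_set_def)
    have hG: "h \<in> carrier G" "\<phi> h r = r" using h by (auto simp: stabilizer_def)
    let ?d = "inverse (\<alpha> h) - \<gamma> r h"
    have d: "?d \<noteq> 0" using h by simp
    have "scale (inverse (\<alpha> h)) (v r) - act h (v r) = scale ?d (v r)"
      using hG rI by (simp add: act_basis vs.scale_left_diff_distrib)
    then have "scale ?d (v r) \<in> A" using A_gen[OF hG(1)] by metis
    then have "scale (inverse ?d) (scale ?d (v r)) \<in> A" using A_subspace by (rule vs.subspace_scale[rotated])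
    then have "v r \<in> A" by (simp only: vs.scale_scale left_inverse[OF d] vs.scale_one)
    then show ?thesis by (simp add: e_def)
  qed
  show ?thesis using Ai Bi by auto
qed

lemma stab_card: assumes "j \<in> I" shows "(of_nat (card (stabilizer G \<phi> j)) :: 'k) \<noteq> 0"
proof -
  have "finite (stabilizer G \<phi> j)" using fin ga.stabilizer_subset finite_subset by blast
  moreover have "\<one> \<in> stabilizer G \<phi> j" using ga.stabilizer_one_closed assms .
  ultimately have "card (stabilizer G \<phi> j) \<noteq> 0" by (auto simp: card_eq_0_iff)
  then show ?thesis by simp
qed

lemma R_aa:
  assumes j: "j \<in> J" and j': "j' \<in> Istar"
  shows "R (aa (v j')) j = (if j' = j then cG * of_nat (card (stabilizer G \<phi> j)) else 0)"
proof -
  have jI: "j \<in> I" "j \<in> Istar" using j Istar_sub by auto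
  have j'I: "j' \<in> I" using j' Istar_sub by auto
  have "R (aa (v j')) j = cG * (\<Sum>h\<in>carrier G. \<alpha> h * (\<gamma> j' h * R (v (\<phi> h j')) j))"
    by (simp add: aa_def' R_scale R_sum act_basis j'I mult.assoc)
  also have "(\<Sum>h\<in>carrier G. \<alpha> h * (\<gamma> j' h * R (v (\<phi> h j')) j))
      = (\<Sum>h\<in>carrier G. if j' = j \<and> \<phi> h j = j then 1 else 0)"
  proof (rule sum.cong)
    fix h assume hG: "h \<in> carrier G"
    have hI: "\<phi> h j' \<in> I" using ga.element_image hG j'I by blast
    show "\<alpha> h * (\<gamma> j' h * R (v (\<phi> h j')) j) = (if j' = j \<and> \<phi> h j = j then 1 else 0)"
    proof (cases "\<phi> h j' = j")
      case True
      then have "j' = j" using rep_eq[OF j' jI(2) hG] by blast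
      then have "h \<in> stabilizer G \<phi> j" using True hG by (simp add: stabilizer_def)
      then have "\<gamma> j h = inverse (\<alpha> h)" using j by (auto simp: I_set_def)
      then show ?thesis using True \<open>j' = j\<close> hI jI ch_nz[OF hG] by (simp add: R_v)
    next
      case False
      then show ?thesis using hI jI by (auto simp: R_v)
    qed
  qed simp
  also have "\<dots> = (if j' = j then of_nat (card (stabilizer G \<phi> j)) else 0)"
  proof (cases "j' = j")
    case True
    have "(\<Sum>h\<in>carrier G. if \<phi> h j = j then 1 else 0) = (\<Sum>h\<in>{h \<in> carrier G. \<phi> h j = j}. (1::'k))"
      using sum.inter_filter[OF fin, of "\<lambda>_. (1::'k)" "\<lambda>h. \<phi> h j = j"] by simp
    then show ?thesis using True by (simp add: stabilizer_def)
  qed simp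
  finally show ?thesis by simp
qed

lemma E4:
  assumes Tt: "finite Tt" "Tt \<subseteq> J"
    and s: "(\<Sum>t\<in>Tt. scale (c t) (aa (v t))) = 0"
  shows "\<forall>t\<in>Tt. c t = 0"
proof
  fix j assume jT: "j \<in> Tt"
  have j: "j \<in> J" "j \<in> I" using jT Tt Istar_sub by auto
  let ?N = "cG * of_nat (card (stabilizer G \<phi> j))"
  have "(\<Sum>t\<in>Tt. c t * R (aa (v t)) j) = (\<Sum>t\<in>Tt. if t = j then c t * ?N else 0)"
    by (rule sum.cong) (use Tt j in \<open>auto simp: R_aa\<close>)
  also have "\<dots> = c j * ?N" using jT Tt(1) by (simp add: sum.delta)
  finally have "c j * ?N = 0" using R_lin_sum[OF s] by simp
  then show "c j = 0" using card_nz stab_card[OF j(2)] by simp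
qed


lemma main:
  "family_basis scale e (Inl ` Aidx \<union> Inr ` (Istar - J)) A
   \<and> family_basis scale (\<lambda>j. aa (v j)) J (alpha_fix G scale act \<alpha>)
   \<and> family_basis_mod scale v J A"
proof -
  let ?X = "Inl ` Aidx \<union> Inr ` Istar"
  let ?X1 = "Inl ` Aidx \<union> Inr ` (Istar - J)"
  have EX: "inj_on e ?X \<and> vs.independent (e ` ?X)"
    by (rule vs.fam_indepI) (rule E1; assumption)
  have E4': "inj_on (\<lambda>j. aa (v j)) J \<and> vs.independent ((\<lambda>j. aa (v j)) ` J)"
    by (rule vs.fam_indepI) (rule E4; assumption)
  have sub: "?X1 \<subseteq> ?X" by blast
  have "?X = ?X1 \<union> Inr ` J" by blast
  then have s1: "e ` ?X = e ` ?X1 \<union> e ` (Inr ` J)" by (simp only: image_Un)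
  have s2: "e ` (Inr ` J) = v ` J" by (force simp: e_def)
  have spanX1: "vs.span (e ` ?X1) \<subseteq> A" using E3 A_subspace by (rule vs.span_minimal)
  have decomp: "\<exists>x Tt d. x \<in> vs.span (e ` ?X1) \<and> finite Tt \<and> Tt \<subseteq> J \<and> z = x + (\<Sum>t\<in>Tt. scale (d t) (v t))" for z
  proof -
    have "vs.span (e ` ?X1 \<union> v ` J) = UNIV" by (simp only: s1[symmetric] s2[symmetric] E2)
    then have "z \<in> vs.span (e ` ?X1 \<union> v ` J)" by simp
    then obtain x y where xy: "x \<in> vs.span (e ` ?X1)" "y \<in> vs.span (v ` J)" "z = x + y"
      unfolding vs.span_Un by blast
    obtain Tt d where Td: "finite Tt" "Tt \<subseteq> J" "y = (\<Sum>t\<in>Tt. scale (d t) (v t))"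
      using vs.fam_span_explicit[OF xy(2)] by (elim exE conjE)
    show ?thesis
      by (rule exI[of _ x], rule exI[of _ Tt], rule exI[of _ d]) (simp only: xy(1) xy(3) Td simp_thms)
  qed
  have aa_comb: "aa (\<Sum>t\<in>Tt. scale (d t) (v t)) = (\<Sum>t\<in>Tt. scale (d t) (aa (v t)))" for Tt d
    by (simp add: aa_sum aa_scale)
  have p1: "family_basis scale e ?X1 A"
    unfolding family_basis_def
  proof (intro conjI)
    show "inj_on e ?X1" using EX sub inj_on_subset by blast
    show "vs.independent (e ` ?X1)" using EX sub by (meson image_mono vs.independent_mono)
    show "vs.span (e ` ?X1) = A"
    proof
      show "vs.span (e ` ?X1) \<subseteq> A" by (rule spanX1)
      show "A \<subseteq> vs.span (e ` ?X1)"
      proof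
        fix z assume z: "z \<in> A"
        obtain x Tt d where d: "x \<in> vs.span (e ` ?X1)" "finite Tt" "Tt \<subseteq> J"
          "z = x + (\<Sum>t\<in>Tt. scale (d t) (v t))" using decomp[of z] by auto
        have "aa z = 0" using aa_A z .
        moreover have "aa x = 0" using aa_A spanX1 d(1) by blast
        ultimately have "(\<Sum>t\<in>Tt. scale (d t) (aa (v t))) = 0" using d(4) by (simp add: aa_add aa_comb)
        then have "\<forall>t\<in>Tt. d t = 0" using E4 d(2,3) by blast
        then have "(\<Sum>t\<in>Tt. scale (d t) (v t)) = 0" by simp
        then show "z \<in> vs.span (e ` ?X1)" using d by simp
      qed
    qed
  qed
  have p2: "family_basis scale (\<lambda>j. aa (v j)) J (alpha_fix G scale act \<alpha>)"
    unfolding family_basis_def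
  proof (intro conjI)
    show "inj_on (\<lambda>j. aa (v j)) J" using E4' by blast
    show "vs.independent ((\<lambda>j. aa (v j)) ` J)" using E4' by blast
    show "vs.span ((\<lambda>j. aa (v j)) ` J) = alpha_fix G scale act \<alpha>"
    proof
      show "vs.span ((\<lambda>j. aa (v j)) ` J) \<subseteq> alpha_fix G scale act \<alpha>"
        using aa_in_fix fix_subspace by (intro vs.span_minimal) auto
      show "alpha_fix G scale act \<alpha> \<subseteq> vs.span ((\<lambda>j. aa (v j)) ` J)"
      proof
        fix z assume z: "z \<in> alpha_fix G scale act \<alpha>"
        obtain x Tt d where d: "x \<in> vs.span (e ` ?X1)" "finite Tt" "Tt \<subseteq> J"
          "z = x + (\<Sum>t\<in>Tt. scale (d t) (v t))" using decomp[of z] by auto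
        have "aa x = 0" using aa_A spanX1 d(1) by blast
        then have "z = (\<Sum>t\<in>Tt. scale (d t) (aa (v t)))"
          using aa_fix[OF z] d(4) by (simp add: aa_add aa_comb)
        also have "\<dots> \<in> vs.span ((\<lambda>j. aa (v j)) ` J)"
          using d(3) by (intro vs.span_sum vs.span_scale vs.span_base) auto
        finally show "z \<in> vs.span ((\<lambda>j. aa (v j)) ` J)" .
      qed
    qed
  qed
  have p3: "family_basis_mod scale v J A"
    unfolding family_basis_mod_def
  proof (intro conjI allI impI)
    fix Tt c assume Tt: "finite Tt" "Tt \<subseteq> J" and s: "(\<Sum>t\<in>Tt. scale (c t) (v t)) \<in> A"
    have "(\<Sum>t\<in>Tt. scale (c t) (aa (v t))) = 0" using aa_A[OF s] by (simp add: aa_comb)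
    then show "\<forall>t\<in>Tt. c t = 0" using E4 Tt by blast
  next
    fix z
    obtain x Tt d where d: "x \<in> vs.span (e ` ?X1)" "finite Tt" "Tt \<subseteq> J"
      "z = x + (\<Sum>t\<in>Tt. scale (d t) (v t))" using decomp[of z] by auto
    have "z - (\<Sum>t\<in>Tt. scale (d t) (v t)) \<in> A" using d spanX1 by auto
    show "\<exists>Tt c. finite Tt \<and> Tt \<subseteq> J \<and> z - (\<Sum>t\<in>Tt. scale (c t) (v t)) \<in> A"
      by (rule exI[of _ Tt], rule exI[of _ d]) (simp only: d(2) d(3) \<open>z - (\<Sum>t\<in>Tt. scale (d t) (v t)) \<in> A\<close> simp_thms)
  qed
  show ?thesis using p1 p2 p3 by blast
qed

end

theorem proposition1p2p6:
  fixes G :: "('g, 'b) monoid_scheme" (structure)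
    and scale :: "'k::field_char_0 \<Rightarrow> 'm::ab_group_add \<Rightarrow> 'm"
    and act :: "'g \<Rightarrow> 'm \<Rightarrow> 'm"
    and v :: "'i \<Rightarrow> 'm"
    and I :: "'i set"
    and \<phi> :: "'g \<Rightarrow> 'i \<Rightarrow> 'i"
    and \<gamma> :: "'i \<Rightarrow> 'g \<Rightarrow> 'k"
    and \<alpha> :: "'g \<Rightarrow> 'k"
    and Istar :: "'i set"
    and T :: "'i \<Rightarrow> 'g set"
  assumes grp: "group G" and fin: "finite (carrier G)"
    and vs: "vector_space scale"
    and char: "one_dim_char G \<alpha>"
    and basis: "family_basis scale v I UNIV"
    and action: "group_action G I \<phi>"
    and gamma_nz: "\<And>i g. i \<in> I \<Longrightarrow> g \<in> carrier G \<Longrightarrow> \<gamma> i g \<noteq> 0"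
    and gamma_cocycle: "\<And>i g h. i \<in> I \<Longrightarrow> g \<in> carrier G \<Longrightarrow> h \<in> carrier G \<Longrightarrow>
            \<gamma> i (g \<otimes> h) = \<gamma> (\<phi> h i) g * \<gamma> i h"
    and act_lin: "\<And>g. g \<in> carrier G \<Longrightarrow> Vector_Spaces.linear scale scale (act g)"
    and act_basis: "\<And>g i. g \<in> carrier G \<Longrightarrow> i \<in> I \<Longrightarrow> act g (v i) = scale (\<gamma> i g) (v (\<phi> g i))"
    and Istar_sub: "Istar \<subseteq> I"
    and Istar_rep: "\<And>i. i \<in> I \<Longrightarrow> \<exists>!r. r \<in> Istar \<and> i \<in> orbit G \<phi> r"
    and T_sub: "\<And>i. i \<in> Istar \<Longrightarrow> T i \<subseteq> carrier G"
    and T_transv: "\<And>i g. i \<in> Istar \<Longrightarrow> g \<in> carrier G \<Longrightarrow>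
            \<exists>!t. t \<in> T i \<and> t \<in> g <# stabilizer G \<phi> i"
  shows
    "family_basis scale
       (\<lambda>x. case x of
              Inl (i, g) \<Rightarrow> v i - scale (\<alpha> g * \<gamma> i g) (v (\<phi> g i))
            | Inr i \<Rightarrow> v i)
       (Inl ` {(i, g). i \<in> Istar \<and> g \<in> T i \<and> g \<notin> stabilizer G \<phi> i}
        \<union> Inr ` (Istar - Istar \<inter> I_set G I \<phi> \<gamma> \<alpha>))
       (alpha_sub G scale act \<alpha>)
     \<and> family_basis scale (\<lambda>j. a_op G scale act \<alpha> (v j))
         (Istar \<inter> I_set G I \<phi> \<gamma> \<alpha>) (alpha_fix G scale act \<alpha>)
     \<and> family_basis_mod scale v (Istar \<inter> I_set G I \<phi> \<gamma> \<alpha>) (alpha_sub G scale act \<alpha>)"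
proof -
  interpret pp_ctx G scale act v I \<phi> \<gamma> \<alpha> Istar T
    by (rule pp_ctx.intro[OF assms])
  show ?thesis using main by (simp only: e_def Aidx_def)
qed

end
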